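(* Let $G=([n],E)$ be a connected simple graph with $n\ge2$, vertex degrees $d_i$, and $\mathsf{B}_G=\{d_j^{-1/2}E_{i,j},\ d_i^{-1/2}E_{j,i} : \{i,j\}\in E\}$. Then (1) $G$ has an independent set of size $s$ if and only if $\mathsf{B}_G$ has an isotropic space of dimension $s$; (2) $G$ has a vertex $c$-coloring (partition of $[n]$ into $c$ independent sets) if and only if $\mathsf{B}_G$ has an isotropic $c$-decomposition.
   Context: $E_{i,j}$ is the matrix with $(i,j)$ entry $1$ and others $0$. For a finite set $\mathsf{B}\subseteq\mathrm{M}(n,\mathbb{C})$, an isotropic space is a subspace $U\le\mathbb{C}^n$ with $u^\dagger Bu'=0$ for all $u,u'\in U$ and all $B\in\mathsf{B}$ ($\dagger$ = conjugate transpose). An isotropic $c$-decomposition of $\mathsf{B}$ is an orthogonal (w.r.t. the standard Hermitian inner product) direct sum decomposition $\mathbb{C}^n=U_1\oplus\cdots\oplus U_c$ into $c$ nonzero isotropic spaces of $\mathsf{B}$. *)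

theory Defs
  imports "HOL-Analysis.Analysis"
begin

(* Graphs on the vertex type 'n (finite, playing the role of [n]); edges are 2-element sets. *)
definition simple_graph :: "'n set set \<Rightarrow> bool" where
  "simple_graph E \<longleftrightarrow> (\<forall>e\<in>E. \<exists>i j. i \<noteq> j \<and> e = {i, j})"

definition graph_connected :: "'n set set \<Rightarrow> bool" where
  "graph_connected E \<longleftrightarrow> (\<forall>i j. (\<lambda>a b. {a, b} \<in> E)\<^sup>*\<^sup>* i j)"

definition degree :: "'n set set \<Rightarrow> 'n \<Rightarrow> nat" where
  "degree E i = card {j. {i, j} \<in> E}"

definition independent_set :: "'n set set \<Rightarrow> 'n set \<Rightarrow> bool" where
  "independent_set E S \<longleftrightarrow> (\<forall>i\<in>S. \<forall>j\<in>S. {i, j} \<notin> E)"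

definition has_vertex_coloring :: "'n set set \<Rightarrow> nat \<Rightarrow> bool" where
  "has_vertex_coloring E c \<longleftrightarrow> (\<exists>V :: nat \<Rightarrow> 'n set.
      (\<forall>k<c. V k \<noteq> {} \<and> independent_set E (V k)) \<and>
      (\<forall>k<c. \<forall>l<c. k \<noteq> l \<longrightarrow> V k \<inter> V l = {}) \<and>
      (\<Union>k<c. V k) = UNIV)"

definition matrix_unit :: "'n \<Rightarrow> 'n \<Rightarrow> complex^'n^'n" where
  "matrix_unit i j = (\<chi> a b. if a = i \<and> b = j then 1 else 0)"

definition scale_matrix :: "complex \<Rightarrow> complex^'n^'n \<Rightarrow> complex^'n^'n" where
  "scale_matrix t M = (\<chi> a b. t * M $ a $ b)"

definition sesq :: "complex^'n^'n \<Rightarrow> complex^'n \<Rightarrow> complex^'n \<Rightarrow> complex" where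
  "sesq B u v = (\<Sum>i\<in>UNIV. \<Sum>j\<in>UNIV. cnj (u $ i) * (B $ i $ j) * v $ j)"

definition herm_inner :: "complex^'n \<Rightarrow> complex^'n \<Rightarrow> complex" where
  "herm_inner u v = (\<Sum>i\<in>UNIV. cnj (u $ i) * v $ i)"

definition graph_matrices :: "'n set set \<Rightarrow> (complex^'n^'n) set" where
  "graph_matrices E = {scale_matrix (complex_of_real (1 / sqrt (real (degree E j)))) (matrix_unit i j)
                       | i j. {i, j} \<in> E}"

definition isotropic_space :: "(complex^'n^'n) set \<Rightarrow> (complex^'n) set \<Rightarrow> bool" where
  "isotropic_space Bs U \<longleftrightarrow> vec.subspace U \<and>
     (\<forall>u\<in>U. \<forall>v\<in>U. \<forall>B\<in>Bs. sesq B u v = 0)"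

definition isotropic_decomposition :: "(complex^'n^'n) set \<Rightarrow> nat \<Rightarrow> bool" where
  "isotropic_decomposition Bs c \<longleftrightarrow> (\<exists>U :: nat \<Rightarrow> (complex^'n) set.
      (\<forall>k<c. isotropic_space Bs (U k) \<and> U k \<noteq> {0}) \<and>
      (\<forall>k<c. \<forall>l<c. k \<noteq> l \<longrightarrow> (\<forall>u\<in>U k. \<forall>v\<in>U l. herm_inner u v = 0)) \<and>
      (\<forall>w :: nat \<Rightarrow> complex^'n. (\<forall>k<c. w k \<in> U k) \<and> (\<Sum>k<c. w k) = 0 \<longrightarrow> (\<forall>k<c. w k = 0)) \<and>
      vec.span (\<Union>k<c. U k) = UNIV)"

end

theory Submission imports Defs begin

lemma sesq_unit: "sesq (scale_matrix t (matrix_unit i j)) u v = cnj (u$i) * t * v$j"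
proof -
  have "sesq (scale_matrix t (matrix_unit i j)) u v = (\<Sum>a\<in>UNIV. \<Sum>b\<in>UNIV. if a = i then (if b = j then cnj (u$i) * t * v$j else 0) else 0)"
  proof -
    have h: "\<And>a b. cnj (u $ a) * (t * (if a = i \<and> b = j then 1 else 0)) * v $ b = (if a = i then (if b = j then cnj (u$i) * t * v$j else 0) else 0)" by auto
    show ?thesis unfolding sesq_def scale_matrix_def matrix_unit_def by (simp only: h vec_lambda_beta)
  qed
  also have "\<dots> = (\<Sum>a\<in>UNIV. if a = i then (\<Sum>b\<in>UNIV. if b = j then cnj (u$i) * t * v$j else 0) else 0)"
    by (intro sum.cong refl) simp
  also have "\<dots> = cnj (u$i) * t * v$j" by simp
  finally show ?thesis .
qed

definition supp :: "(complex^'n) set \<Rightarrow> 'n set" where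
  "supp U = {i. \<exists>u\<in>U. u$i \<noteq> 0}"

definition coord :: "'n set \<Rightarrow> (complex^'n) set" where
  "coord S = {u. \<forall>i. i \<notin> S \<longrightarrow> u$i = 0}"

lemma degree_pos:
  fixes E :: "('n::finite) set set"
  assumes "{a,b} \<in> E" shows "degree E b > 0"
proof -
  have "{b,a} \<in> E" using assms by (simp add: insert_commute)
  hence "a \<in> {j. {b,j} \<in> E}" by simp
  thus ?thesis unfolding degree_def by (metis card_gt_0_iff empty_iff finite)
qed

lemma gm_mem:
  assumes "{a,b} \<in> E"
  shows "scale_matrix (complex_of_real (1 / sqrt (real (degree E b)))) (matrix_unit a b) \<in> graph_matrices E"
  unfolding graph_matrices_def using assms by blast

lemma isotropic_supp:
  fixes E :: "('n::finite) set set"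
  assumes "isotropic_space (graph_matrices E) U"
  shows "independent_set E (supp U)"
  unfolding independent_set_def
proof (intro ballI notI)
  fix a b assume a: "a \<in> supp U" and b: "b \<in> supp U" and e: "{a,b} \<in> E"
  obtain u where u: "u \<in> U" "u$a \<noteq> 0" using a unfolding supp_def by auto
  obtain v where v: "v \<in> U" "v$b \<noteq> 0" using b unfolding supp_def by auto
  have "sesq (scale_matrix (complex_of_real (1 / sqrt (real (degree E b)))) (matrix_unit a b)) u v = 0"
    using assms gm_mem[OF e] u v unfolding isotropic_space_def by blast
  moreover have "degree E b > 0" using degree_pos[OF e] .
  ultimately show False using u v by (simp add: sesq_unit)
qed

lemma coord_isotropic:
  fixes E :: "('n::finite) set set"
  assumes "independent_set E S"
  shows "isotropic_space (graph_matrices E) (coord S)"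
  unfolding isotropic_space_def
proof (intro conjI ballI)
  show "vec.subspace (coord S)" unfolding vec.subspace_def coord_def by auto
next
  fix u v B assume u: "u \<in> coord S" and v: "v \<in> coord S" and B: "B \<in> graph_matrices E"
  then obtain i j where ij: "{i,j} \<in> E" "B = scale_matrix (complex_of_real (1 / sqrt (real (degree E j)))) (matrix_unit i j)"
    unfolding graph_matrices_def by blast
  have "i \<notin> S \<or> j \<notin> S" using assms ij(1) unfolding independent_set_def by blast
  thus "sesq B u v = 0" using u v ij(2) by (auto simp: sesq_unit coord_def)
qed

lemma coord_span: "coord S \<subseteq> vec.span ((\<lambda>i. axis i 1) ` S)"
proof
  fix u assume u: "u \<in> coord S"
  have "u = (\<Sum>i\<in>S. u$i *s axis i 1)"
    using u by (auto simp: vec_eq_iff coord_def axis_def if_distrib[where f="\<lambda>x. _ * x"] cong: if_cong)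
  also have "\<dots> \<in> vec.span ((\<lambda>i. axis i 1) ` S)"
    by (intro vec.span_sum vec.span_scale vec.span_base) auto
  finally show "u \<in> vec.span ((\<lambda>i. axis i 1) ` S)" .
qed

lemma dim_coord:
  fixes S :: "('n::finite) set"
  shows "vec.dim (coord S) = card S"
proof (rule antisym)
  have c: "card ((\<lambda>i. axis i (1::complex)) ` S) = card S"
    by (rule card_image) (auto simp: inj_on_def axis_eq_axis)
  show "vec.dim (coord S) \<le> card S"
  proof -
    have "vec.dim (coord S) \<le> card ((\<lambda>i. axis i (1::complex)) ` S)"
      by (rule vec.dim_le_card[OF coord_span]) simp
    thus ?thesis using c by simp
  qed
  have ind: "vec.independent ((\<lambda>i. axis i (1::complex)) ` S)"
    by (rule vec.independent_mono[OF independent_cart_basis]) (auto simp: cart_basis_def)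
  have sub: "(\<lambda>i. axis i (1::complex)) ` S \<subseteq> coord S" by (auto simp: coord_def axis_def)
  show "card S \<le> vec.dim (coord S)"
    using vec.independent_bound_general[OF ind] vec.dim_subset[OF sub] c by simp
qed


lemma herm_self_zero:
  fixes u :: "complex^'n::finite"
  assumes "herm_inner u u = 0" shows "u = 0"
proof -
  have "herm_inner u u = complex_of_real (\<Sum>i\<in>UNIV. (norm (u$i))^2)"
    unfolding herm_inner_def of_real_sum
    by (intro sum.cong refl) (simp only: complex_norm_square mult.commute)
  hence "(\<Sum>i\<in>UNIV. (norm (u$i))^2) = 0" using assms by (metis of_real_eq_0_iff)
  hence "\<forall>i\<in>UNIV. (norm (u$i))^2 = 0" by (subst sum_nonneg_eq_0_iff[symmetric]) auto
  thus ?thesis by (simp add: vec_eq_iff)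
qed

lemma refine:
  fixes f :: "'n::finite \<Rightarrow> nat"
  assumes "c \<le> CARD('n)" "\<forall>x. f x < c" "\<forall>x y. f x = f y \<longrightarrow> {x,y} \<notin> E"
  shows "\<exists>g. (\<forall>x. g x < c) \<and> (\<forall>x y. g x = g y \<longrightarrow> {x,y} \<notin> E) \<and> {..<c} \<subseteq> range g"
proof -
  have "\<forall>f::'n \<Rightarrow> nat. c - card (range f) = d \<longrightarrow> (\<forall>x. f x < c) \<longrightarrow> (\<forall>x y. f x = f y \<longrightarrow> {x,y} \<notin> E) \<longrightarrow>
     (\<exists>g. (\<forall>x. g x < c) \<and> (\<forall>x y. g x = g y \<longrightarrow> {x,y} \<notin> E) \<and> {..<c} \<subseteq> range g)" for d
  proof (induction d rule: less_induct)
    case (less d)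
    show ?case
    proof (intro allI impI)
      fix f :: "'n \<Rightarrow> nat"
      assume d: "c - card (range f) = d" and lt: "\<forall>x. f x < c" and pr: "\<forall>x y. f x = f y \<longrightarrow> {x,y} \<notin> E"
      show "\<exists>g. (\<forall>x. g x < c) \<and> (\<forall>x y. g x = g y \<longrightarrow> {x,y} \<notin> E) \<and> {..<c} \<subseteq> range g"
      proof (cases "{..<c} \<subseteq> range f")
        case True thus ?thesis using lt pr by blast
      next
        case False
        then obtain k where k: "k < c" "k \<notin> range f" by auto
        have rsub: "range f \<subseteq> {..<c}" using lt by auto
        have "range f \<subset> {..<c}" using rsub k by auto
        hence cr: "card (range f) < c" by (metis card_lessThan finite_lessThan psubset_card_mono)
        hence "card (range f) < CARD('n)" using assms(1) by simp
        hence "\<not> inj f" by (metis card_image order_less_irrefl)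
        then obtain x y where xy: "x \<noteq> y" "f x = f y" unfolding inj_def by blast
        define g where "g = f(x := k)"
        have glt: "\<forall>z. g z < c" using lt k by (simp add: g_def)
        have gpr: "\<forall>a b. g a = g b \<longrightarrow> {a,b} \<notin> E"
        proof (intro allI impI)
          fix a b assume e: "g a = g b"
          show "{a,b} \<notin> E"
          proof (cases "a = x")
            case True
            show ?thesis
            proof (cases "b = x")
              case True thus ?thesis using pr \<open>a = x\<close> by blast
            next
              case False thus ?thesis using e k \<open>a = x\<close> by (auto simp: g_def)
            qed
          next
            case False
            show ?thesis
            proof (cases "b = x")
              case True thus ?thesis using e k \<open>a \<noteq> x\<close> by (auto simp: g_def)
            next
              case False thus ?thesis using e pr \<open>a \<noteq> x\<close> by (auto simp: g_def)
            qed
          qed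
        qed
        have "range g = insert k (range f)"
        proof
          show "range g \<subseteq> insert k (range f)" by (auto simp: g_def)
          show "insert k (range f) \<subseteq> range g"
          proof
            fix z assume "z \<in> insert k (range f)"
            then consider "z = k" | w where "z = f w" by auto
            thus "z \<in> range g"
            proof cases
              case 1 thus ?thesis by (metis fun_upd_same g_def rangeI)
            next
              case 2 show ?thesis
              proof (cases "w = x")
                case True hence "g y = z" using 2 xy by (simp add: g_def)
                thus ?thesis by (metis rangeI)
              next
                case False hence "g w = z" using 2 by (simp add: g_def)
                thus ?thesis by (metis rangeI)
              qed
            qed
          qed
        qed
        hence "card (range g) = Suc (card (range f))" using k by simp
        hence "c - card (range g) < d" using d cr by simp
        thus ?thesis using less.IH glt gpr by blast
      qed
    qed
  qed
  thus ?thesis using assms by blast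
qed

lemma coloring_of_fun:
  fixes g :: "'n::finite \<Rightarrow> nat"
  assumes "\<forall>x. g x < c" "\<forall>x y. g x = g y \<longrightarrow> {x,y} \<notin> E" "{..<c} \<subseteq> range g"
  shows "has_vertex_coloring E c"
  unfolding has_vertex_coloring_def
proof (intro exI[of _ "\<lambda>k. {x. g x = k}"] conjI allI impI)
  fix k assume "k < c"
  thus "{x. g x = k} \<noteq> {}" using assms(3) by auto
  show "independent_set E {x. g x = k}" using assms(2) unfolding independent_set_def by auto
next
  show "(\<Union>k<c. {x. g x = k}) = UNIV" using assms(1) by auto
qed auto


lemma part1:
  fixes E :: "('n::finite) set set"
  shows "(\<exists>S. independent_set E S \<and> card S = s) \<longleftrightarrow>
             (\<exists>U. isotropic_space (graph_matrices E) U \<and> vec.dim U = s)"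
proof
  assume "\<exists>S. independent_set E S \<and> card S = s"
  then obtain S where "independent_set E S" "card S = s" by blast
  thus "\<exists>U. isotropic_space (graph_matrices E) U \<and> vec.dim U = s"
    using coord_isotropic dim_coord by blast
next
  assume "\<exists>U. isotropic_space (graph_matrices E) U \<and> vec.dim U = s"
  then obtain U where U: "isotropic_space (graph_matrices E) U" "vec.dim U = s" by blast
  have ind: "independent_set E (supp U)" using isotropic_supp[OF U(1)] .
  have "U \<subseteq> coord (supp U)" by (auto simp: coord_def supp_def)
  hence "vec.dim U \<le> vec.dim (coord (supp U))" by (rule vec.dim_subset)
  moreover have "vec.dim (coord (supp U)) = card (supp U)" by (rule dim_coord)
  ultimately have "s \<le> card (supp U)" using U(2) by linarith
  then obtain S where S: "S \<subseteq> supp U" "card S = s" by (metis obtain_subset_with_card_n)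
  have "independent_set E S" using ind S(1) unfolding independent_set_def by blast
  thus "\<exists>S. independent_set E S \<and> card S = s" using S by blast
qed

lemma part2a:
  fixes E :: "('n::finite) set set"
  assumes "has_vertex_coloring E c"
  shows "isotropic_decomposition (graph_matrices E) c"
proof -
  obtain V :: "nat \<Rightarrow> 'n set" where V: "\<forall>k<c. V k \<noteq> {} \<and> independent_set E (V k)"
    "\<forall>k<c. \<forall>l<c. k \<noteq> l \<longrightarrow> V k \<inter> V l = {}" "(\<Union>k<c. V k) = UNIV"
    using assms unfolding has_vertex_coloring_def by blast
  show ?thesis unfolding isotropic_decomposition_def
  proof (intro exI[of _ "\<lambda>k. coord (V k)"] conjI allI impI ballI)
    fix k assume k: "k < c"
    show "isotropic_space (graph_matrices E) (coord (V k))" using V(1) k coord_isotropic by blast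
    obtain x where x: "x \<in> V k" using V(1) k by blast
    have "axis x (1::complex) \<in> coord (V k)" using x by (auto simp: coord_def axis_def)
    moreover have "axis x (1::complex) \<noteq> 0" by (simp add: axis_eq_0_iff)
    ultimately show "coord (V k) \<noteq> {0}" by blast
  next
    fix k l u v assume kl: "k < c" "l < c" "k \<noteq> l" and u: "u \<in> coord (V k)" and v: "v \<in> coord (V l)"
    have "\<forall>i. i \<notin> V k \<or> i \<notin> V l" using V(2) kl by blast
    hence "\<forall>i. cnj (u $ i) * v $ i = 0" using u v unfolding coord_def by auto
    thus "herm_inner u v = 0" unfolding herm_inner_def by (intro sum.neutral) simp
  next
    fix w :: "nat \<Rightarrow> complex^'n" and k
    assume w: "(\<forall>k<c. w k \<in> coord (V k)) \<and> (\<Sum>k<c. w k) = 0" and k: "k < c"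
    show "w k = 0"
    proof (subst vec_eq_iff, intro allI)
      fix i
      show "w k $ i = 0 $ i"
      proof (cases "i \<in> V k")
        case False thus ?thesis using w k by (simp add: coord_def)
      next
        case True
        have z: "(\<Sum>l\<in>{..<c}-{k}. w l $ i) = 0"
        proof (intro sum.neutral ballI)
          fix l assume l: "l \<in> {..<c}-{k}"
          hence "i \<notin> V l" using V(2) k True by blast
          thus "w l $ i = 0" using w l by (simp add: coord_def)
        qed
        have "0 = (\<Sum>l<c. w l) $ i" using w by simp
        also have "\<dots> = (\<Sum>l<c. w l $ i)" by simp
        also have "\<dots> = w k $ i + (\<Sum>l\<in>{..<c}-{k}. w l $ i)"
          by (rule sum.remove) (use k in auto)
        finally show ?thesis using z by simp
      qed
    qed
  next
    have "cart_basis \<subseteq> (\<Union>k<c. coord (V k))"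
    proof
      fix b :: "complex^'n" assume "b \<in> cart_basis"
      then obtain x where x: "b = axis x 1" unfolding cart_basis_def by blast
      obtain k where "k < c" "x \<in> V k" using V(3) by blast
      thus "b \<in> (\<Union>k<c. coord (V k))" using x by (auto simp: coord_def axis_def)
    qed
    hence "vec.span cart_basis \<subseteq> vec.span (\<Union>k<c. coord (V k))" by (rule vec.span_mono)
    thus "vec.span (\<Union>k<c. coord (V k)) = UNIV" by auto
  qed
qed


lemma part2b:
  fixes E :: "('n::finite) set set"
  assumes "isotropic_decomposition (graph_matrices E) c"
  shows "has_vertex_coloring E c"
proof -
  obtain U :: "nat \<Rightarrow> (complex^'n) set" where
    U1: "\<forall>k<c. isotropic_space (graph_matrices E) (U k) \<and> U k \<noteq> {0}" and
    U2: "\<forall>k<c. \<forall>l<c. k \<noteq> l \<longrightarrow> (\<forall>u\<in>U k. \<forall>v\<in>U l. herm_inner u v = 0)" and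
    U3: "\<forall>w :: nat \<Rightarrow> complex^'n. (\<forall>k<c. w k \<in> U k) \<and> (\<Sum>k<c. w k) = 0 \<longrightarrow> (\<forall>k<c. w k = 0)" and
    U4: "vec.span (\<Union>k<c. U k) = UNIV"
    using assms unfolding isotropic_decomposition_def by blast
  have sub: "vec.subspace (U k)" if "k < c" for k using U1 that unfolding isotropic_space_def by blast
  have cover: "\<exists>k<c. x \<in> supp (U k)" for x
  proof (rule ccontr)
    assume "\<not> (\<exists>k<c. x \<in> supp (U k))"
    hence "(\<Union>k<c. U k) \<subseteq> {v. v $ x = 0}" unfolding supp_def by auto
    moreover have "vec.subspace {v :: complex^'n. v $ x = 0}" unfolding vec.subspace_def by auto
    ultimately have "vec.span (\<Union>k<c. U k) \<subseteq> {v. v $ x = 0}" by (rule vec.span_minimal)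
    hence "axis x (1::complex) \<in> {v. v $ x = 0}" using U4 by blast
    thus False by (simp add: axis_def)
  qed
  define f where "f x = (LEAST k. k < c \<and> x \<in> supp (U k))" for x
  have f1: "f x < c \<and> x \<in> supp (U (f x))" for x
    unfolding f_def using cover[of x] by (metis (mono_tags, lifting) LeastI)
  have fpr: "\<forall>x y. f x = f y \<longrightarrow> {x,y} \<notin> E"
  proof (intro allI impI)
    fix x y assume "f x = f y"
    hence "x \<in> supp (U (f x))" "y \<in> supp (U (f x))" using f1 by metis+
    moreover have "independent_set E (supp (U (f x)))" using isotropic_supp U1 f1 by blast
    ultimately show "{x,y} \<notin> E" unfolding independent_set_def by blast
  qed
  have "\<exists>u. u \<in> U k \<and> u \<noteq> 0" if "k < c" for k
    using U1 that sub[OF that] vec.subspace_0 by blast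
  then obtain w where w: "\<And>k. k < c \<Longrightarrow> w k \<in> U k \<and> w k \<noteq> 0" by metis
  have winj: "inj_on w {..<c}"
  proof (rule inj_onI)
    fix k l assume "k \<in> {..<c}" "l \<in> {..<c}" "w k = w l"
    show "k = l"
    proof (rule ccontr)
      assume "k \<noteq> l"
      hence "herm_inner (w k) (w l) = 0" using U2 w \<open>k \<in> {..<c}\<close> \<open>l \<in> {..<c}\<close> by auto
      hence "w k = 0" using \<open>w k = w l\<close> herm_self_zero by metis
      thus False using w \<open>k \<in> {..<c}\<close> by auto
    qed
  qed
  have windep: "vec.independent (w ` {..<c})"
    unfolding vec.independent_explicit
  proof (intro conjI allI impI ballI)
    show "finite (w ` {..<c})" by simp
    fix a assume a: "(\<Sum>v\<in>w ` {..<c}. a v *s v) = 0"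
    fix v assume v: "v \<in> w ` {..<c}"
    then obtain k where k: "k < c" "v = w k" by auto
    define w' where "w' l = a (w l) *s w l" for l
    have "(\<Sum>l<c. w' l) = (\<Sum>v\<in>w ` {..<c}. a v *s v)"
      unfolding w'_def by (rule sum.reindex[OF winj, symmetric, unfolded comp_def])
    hence "(\<forall>l<c. w' l \<in> U l) \<and> (\<Sum>l<c. w' l) = 0"
      using a w sub unfolding w'_def by (auto intro: vec.subspace_scale)
    hence "w' k = 0" using U3 k by blast
    thus "a v = 0" using k w unfolding w'_def by auto
  qed
  have "card (w ` {..<c}) \<le> card (cart_basis :: (complex^'n) set)"
    using vec.independent_span_bound[OF finite_cart_basis windep] by simp
  hence cle: "c \<le> CARD('n)" using card_image[OF winj] card_cart_basis[where 'a=complex and 'i='n] by simp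
  have flt: "\<forall>x. f x < c" using f1 by blast
  obtain g where "\<forall>x. g x < c" "\<forall>x y. g x = g y \<longrightarrow> {x,y} \<notin> E" "{..<c} \<subseteq> range g"
    using refine[OF cle flt fpr] by (elim exE conjE)
  thus ?thesis by (rule coloring_of_fun)
qed

theorem proposition11p2:
  fixes E :: "('n::finite) set set"
  assumes "CARD('n) \<ge> 2"
    and "simple_graph E"
    and "graph_connected E"
  shows "(\<forall>s::nat. (\<exists>S. independent_set E S \<and> card S = s) \<longleftrightarrow>
             (\<exists>U. isotropic_space (graph_matrices E) U \<and> vec.dim U = s)) \<and>
         (\<forall>c::nat. has_vertex_coloring E c \<longleftrightarrow> isotropic_decomposition (graph_matrices E) c)"
proof (intro conjI allI)
  fix s :: nat show "(\<exists>S. independent_set E S \<and> card S = s) \<longleftrightarrow>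
             (\<exists>U. isotropic_space (graph_matrices E) U \<and> vec.dim U = s)" by (rule part1)
next
  fix c :: nat show "has_vertex_coloring E c \<longleftrightarrow> isotropic_decomposition (graph_matrices E) c"
    using part2a part2b by (intro iffI)
qed

end
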